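(* Let $D\subseteq\mathbb{R}^{p+2}$ be a domain invariant under $(\mathbf{x}_p,r)\mapsto(\mathbf{x}_p,-r)$ and let $f(\mathbf{x})=F_1(\mathbf{x}')+\underline{\omega}F_2(\mathbf{x}')$ be a generalized partial-slice function on $\Omega_D$ induced by a $C^1$ stem function, with $f\in C^1(\Omega_D,\mathbb{A})$. Then $f$ is monogenic on $\Omega_D$ (i.e. $D_{\mathbf{x}}f=0$) if and only if $$D_{\mathbf{x}_p}F_1(\mathbf{x}')-\partial_rF_2(\mathbf{x}')=\frac{q-1}{r}F_2(\mathbf{x}'),\qquad \overline{D}_{\mathbf{x}_p}F_2(\mathbf{x}')+\partial_rF_1(\mathbf{x}')=0,\qquad \mathbf{x}'=(\mathbf{x}_p,r)\in D,\ r\neq0.$$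
   Context: Let $\mathbb{A}$ be a real alternative algebra (the associator $[a,b,c]=(ab)c-a(bc)$ is an alternating trilinear function) with unity $1$, of finite real dimension $d>1$, equipped with an anti-involution $a\mapsto a^c$ (real linear, $a^c=a$ for real $a$, $(a^c)^c=a$, $(ab)^c=b^ca^c$). Let $t(x)=x+x^c$, $n(x)=xx^c$, $\mathbb{S}_{\mathbb{A}}=\{x: t(x)=0,\ n(x)=1\}$ (assumed nonempty) and $Q_{\mathbb{A}}=\mathbb{R}\cup\{x: t(x)\in\mathbb{R},\ n(x)\in\mathbb{R},\ 4n(x)>t(x)^2\}$. Let $M$ be a real subspace with $\mathbb{R}\subsetneq M\subseteq Q_{\mathbb{A}}$ having a basis $(v_0,\dots,v_m)$, $m\ge1$, $v_0=1$, $v_s\in\mathbb{S}_{\mathbb{A}}$, $v_sv_t=-v_tv_s$ for distinct $s,t\ge1$; complete it to a basis of $\mathbb{A}$ with associated Euclidean norm. Identify $x=\sum x_sv_s\in M$ with $(x_0,\dots,x_m)\in\mathbb{R}^{m+1}$; differentiate componentwise. Fix $p\in\{0,\dots,m-1\}$, $q=m-p$; $\mathbf{x}=\mathbf{x}_p+\underline{\mathbf{x}}_q$ with $\mathbf{x}_p=\sum_{s=0}^px_sv_s\in\mathbb{R}^{p+1}$, $\underline{\mathbf{x}}_q=\sum_{s=p+1}^m x_sv_s$; $\mathbb{S}=\{\sum_{s=p+1}^m x_sv_s:\sum x_s^2=1\}$; $\underline{\mathbf{x}}_q=r\underline{\omega}$, $r=|\underline{\mathbf{x}}_q|$; $\mathbf{x}'=(\mathbf{x}_p,r)$.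 $D_{\mathbf{x}_p}f=\sum_{s=0}^p v_s\partial_{x_s}f$, $\overline{D}_{\mathbf{x}_p}f=\partial_{x_0}f-\sum_{s=1}^pv_s\partial_{x_s}f$, $D_{\mathbf{x}}f=\sum_{s=0}^mv_s\partial_{x_s}f$. $\Omega_D=\{\mathbf{x}_p+r\underline{\omega}:(\mathbf{x}_p,r)\in D,\ r\ge0,\ \underline{\omega}\in\mathbb{S}\}$. A stem function $(F_1,F_2):D\to\mathbb{A}^2$ has $F_1$ even and $F_2$ odd in $r$ and induces the generalized partial-slice function $f(\mathbf{x}_p+r\underline{\omega})=F_1(\mathbf{x}')+\underline{\omega}F_2(\mathbf{x}')$. *)

theory Defs
  imports "HOL-Analysis.Analysis"
begin

text \<open>The algebra A is modelled as a finite-dimensional Euclidean space 'a with an explicit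
 bilinear multiplication mul, unit e and anti-involution cj.  Real numbers are the
 multiples c *R e of the unit.\<close>

definition assoc3 :: "('a::real_vector \<Rightarrow> 'a \<Rightarrow> 'a) \<Rightarrow> 'a \<Rightarrow> 'a \<Rightarrow> 'a \<Rightarrow> 'a" where
  "assoc3 mul a b c = mul (mul a b) c - mul a (mul b c)"

definition is_real_elt :: "'a::real_vector \<Rightarrow> 'a \<Rightarrow> bool" where
  "is_real_elt e x \<longleftrightarrow> (\<exists>c::real. x = c *\<^sub>R e)"

definition alt_algebra_inv ::
  "('a::real_vector \<Rightarrow> 'a \<Rightarrow> 'a) \<Rightarrow> 'a \<Rightarrow> ('a \<Rightarrow> 'a) \<Rightarrow> bool" where
  "alt_algebra_inv mul e cj \<longleftrightarrow>
     bilinear mul \<and>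
     (\<forall>a b. assoc3 mul a a b = 0) \<and>
     (\<forall>a b. assoc3 mul a b a = 0) \<and>
     (\<forall>a b. assoc3 mul b a a = 0) \<and>
     (\<forall>x. mul e x = x \<and> mul x e = x) \<and>
     linear cj \<and>
     (\<forall>c::real. cj (c *\<^sub>R e) = c *\<^sub>R e) \<and>
     (\<forall>a. cj (cj a) = a) \<and>
     (\<forall>a b. cj (mul a b) = mul (cj b) (cj a))"

definition trc :: "('a::real_vector \<Rightarrow> 'a) \<Rightarrow> 'a \<Rightarrow> 'a" where
  "trc cj x = x + cj x"

definition nrm :: "('a::real_vector \<Rightarrow> 'a \<Rightarrow> 'a) \<Rightarrow> ('a \<Rightarrow> 'a) \<Rightarrow> 'a \<Rightarrow> 'a" where
  "nrm mul cj x = mul x (cj x)"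

definition sphA :: "('a::real_vector \<Rightarrow> 'a \<Rightarrow> 'a) \<Rightarrow> 'a \<Rightarrow> ('a \<Rightarrow> 'a) \<Rightarrow> 'a set" where
  "sphA mul e cj = {x. trc cj x = 0 \<and> nrm mul cj x = e}"

definition QA :: "('a::real_vector \<Rightarrow> 'a \<Rightarrow> 'a) \<Rightarrow> 'a \<Rightarrow> ('a \<Rightarrow> 'a) \<Rightarrow> 'a set" where
  "QA mul e cj = {x. is_real_elt e x} \<union>
     {x. \<exists>t n::real. trc cj x = t *\<^sub>R e \<and> nrm mul cj x = n *\<^sub>R e \<and> 4 * n > t\<^sup>2}"

definition pderiv_dir :: "('b::real_normed_vector \<Rightarrow> 'a::real_normed_vector) \<Rightarrow> 'b \<Rightarrow> 'b \<Rightarrow> 'a" where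
  "pderiv_dir f x v = vector_derivative (\<lambda>t::real. f (x + t *\<^sub>R v)) (at 0)"

definition C1_on :: "'b::euclidean_space set \<Rightarrow> ('b \<Rightarrow> 'a::real_normed_vector) \<Rightarrow> bool" where
  "C1_on S F \<longleftrightarrow> (\<exists>F'. (\<forall>x\<in>S. (F has_derivative F' x) (at x)) \<and>
                        (\<forall>v. continuous_on S (\<lambda>x. F' x v)))"

definition vecA :: "('i::finite \<Rightarrow> 'a::real_vector) \<Rightarrow> real^'i \<Rightarrow> 'a" where
  "vecA v x = (\<Sum>i\<in>UNIV. (x $ i) *\<^sub>R v i)"

text \<open>Omega_D, in coordinates (x_p, x_q) of M.\<close>
definition OmegaD :: "((real^'p) \<times> real) set \<Rightarrow> ((real^'p) \<times> (real^'q)) set" where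
  "OmegaD D = {(xp, r *\<^sub>R \<omega>) | xp r \<omega>. (xp, r) \<in> D \<and> r \<ge> 0 \<and> norm \<omega> = 1}"

definition Dx :: "('a::real_normed_vector \<Rightarrow> 'a \<Rightarrow> 'a) \<Rightarrow> ('p::finite \<Rightarrow> 'a) \<Rightarrow> ('q::finite \<Rightarrow> 'a)
   \<Rightarrow> ((real^'p) \<times> (real^'q) \<Rightarrow> 'a) \<Rightarrow> (real^'p) \<times> (real^'q) \<Rightarrow> 'a" where
  "Dx mul vp w f x =
     (\<Sum>i\<in>UNIV. mul (vp i) (pderiv_dir f x (axis i 1, 0))) +
     (\<Sum>j\<in>UNIV. mul (w j) (pderiv_dir f x (0, axis j 1)))"

text \<open>D_{x_p} and its conjugate on functions of x' = (x_p, r); i0 is the index of v_0 = 1.\<close>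
definition Dxp :: "('a::real_normed_vector \<Rightarrow> 'a \<Rightarrow> 'a) \<Rightarrow> ('p::finite \<Rightarrow> 'a)
   \<Rightarrow> ((real^'p) \<times> real \<Rightarrow> 'a) \<Rightarrow> (real^'p) \<times> real \<Rightarrow> 'a" where
  "Dxp mul vp F y = (\<Sum>i\<in>UNIV. mul (vp i) (pderiv_dir F y (axis i 1, 0)))"

definition Dxp_bar :: "('a::real_normed_vector \<Rightarrow> 'a \<Rightarrow> 'a) \<Rightarrow> ('p::finite \<Rightarrow> 'a) \<Rightarrow> 'p
   \<Rightarrow> ((real^'p) \<times> real \<Rightarrow> 'a) \<Rightarrow> (real^'p) \<times> real \<Rightarrow> 'a" where
  "Dxp_bar mul vp i0 F y = pderiv_dir F y (axis i0 1, 0) -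
     (\<Sum>i\<in>UNIV - {i0}. mul (vp i) (pderiv_dir F y (axis i 1, 0)))"

definition dr :: "((real^'p::finite) \<times> real \<Rightarrow> 'a::real_normed_vector) \<Rightarrow> (real^'p) \<times> real \<Rightarrow> 'a" where
  "dr F y = pderiv_dir F y (0, 1)"

end

theory Submission
  imports Defs
begin


lemma lalt_lin:
  assumes bb: "bounded_bilinear mul" and la: "\<forall>a b. assoc3 mul a a b = 0"
  shows "mul x (mul y a) + mul y (mul x a) = mul (mul x y + mul y x) a"
proof -
  interpret bb: bounded_bilinear mul by (rule bb)
  have h: "\<And>z. mul (mul z z) a = mul z (mul z a)" using la by (auto simp: assoc3_def)
  have "mul (mul (x+y) (x+y)) a = mul (x+y) (mul (x+y) a)" by (rule h)
  then show ?thesis using h[of x] h[of y]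
    by (simp add: bb.add_left bb.add_right algebra_simps)
qed

lemma vecA_lin: "linear (vecA w)"
  by (rule linearI) (simp_all add: vecA_def scaleR_add_left sum.distrib scaleR_sum_right)

lemma vecA_axis: "vecA w (axis j 1) = w j"
proof -
  have eq: "(\<lambda>i. (axis j 1 $ i) *\<^sub>R w i) = (\<lambda>i. if i = j then w i else 0)" by (auto simp: axis_def)
  have "(\<Sum>i\<in>UNIV. axis j 1 $ i *\<^sub>R w i) = (\<Sum>i\<in>UNIV. if i = j then w i else 0)"
    by (rule sum.cong) (auto simp: axis_def)
  then show ?thesis unfolding vecA_def by simp
qed

lemma vecA_zero: "vecA w 0 = 0"
  by (simp add: vecA_def)

lemma vecA_sq:
  assumes bb: "bounded_bilinear mul" and wsq: "\<forall>j. mul (w j) (w j) = - e"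
    and aqq: "\<forall>j l. j \<noteq> l \<longrightarrow> mul (w j) (w l) = - mul (w l) (w j)"
  shows "mul (vecA w u) (vecA w u) = - ((norm u)\<^sup>2) *\<^sub>R e"
proof -
  interpret bb: bounded_bilinear mul by (rule bb)
  define T where "T j k = (u$j * u$k) *\<^sub>R mul (w j) (w k)" for j k
  have S: "mul (vecA w u) (vecA w u) = (\<Sum>j\<in>UNIV. \<Sum>k\<in>UNIV. T j k)"
  proof -
    have "mul (vecA w u) (vecA w u) = (\<Sum>k\<in>UNIV. u$k *\<^sub>R (\<Sum>j\<in>UNIV. u$j *\<^sub>R mul (w j) (w k)))"
      by (simp add: vecA_def bb.sum_left bb.sum_right bb.scaleR_left bb.scaleR_right)
    also have "\<dots> = (\<Sum>k\<in>UNIV. \<Sum>j\<in>UNIV. u$k *\<^sub>R (u$j *\<^sub>R mul (w j) (w k)))"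
      by (simp only: scaleR_sum_right)
    also have "\<dots> = (\<Sum>j\<in>UNIV. \<Sum>k\<in>UNIV. u$k *\<^sub>R (u$j *\<^sub>R mul (w j) (w k)))"
      by (rule sum.swap)
    also have "\<dots> = (\<Sum>j\<in>UNIV. \<Sum>k\<in>UNIV. T j k)"
      unfolding T_def by (simp add: mult.commute)
    finally show ?thesis .
  qed
  have sym: "T j k + T k j = (if j = k then (-2 * (u$j)\<^sup>2) *\<^sub>R e else 0)" for j k
  proof (cases "j = k")
    case True
    then show ?thesis using wsq by (simp add: T_def power2_eq_square scaleR_2[symmetric])
  next
    case False
    then have "mul (w k) (w j) = - mul (w j) (w k)" using aqq by metis
    then show ?thesis using False by (simp add: T_def mult.commute)
  qed
  have sw: "(\<Sum>j\<in>UNIV. \<Sum>k\<in>UNIV. T j k) = (\<Sum>j\<in>UNIV. \<Sum>k\<in>UNIV. T k j)"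
    by (rule sum.swap)
  have "2 *\<^sub>R (\<Sum>j\<in>UNIV. \<Sum>k\<in>UNIV. T j k) = (\<Sum>j\<in>UNIV. \<Sum>k\<in>UNIV. T j k + T k j)"
    using sw by (simp add: sum.distrib scaleR_2)
  also have "\<dots> = (\<Sum>j\<in>UNIV. (-2 * (u$j)\<^sup>2) *\<^sub>R e)"
    by (simp add: sym)
  also have "\<dots> = 2 *\<^sub>R (- ((norm u)\<^sup>2) *\<^sub>R e)"
  proof -
    have nn: "(norm u)\<^sup>2 = (\<Sum>j\<in>UNIV. (u$j)\<^sup>2)"
      unfolding power2_norm_eq_inner inner_vec_def by (simp add: power2_eq_square)
    have "(\<Sum>j\<in>UNIV. (-2 * (u$j)\<^sup>2) *\<^sub>R e) = (-2 * (\<Sum>j\<in>UNIV. (u$j)\<^sup>2)) *\<^sub>R e"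
      by (simp add: scaleR_sum_left sum_distrib_left)
    then show ?thesis using nn by simp
  qed
  finally have h2: "2 *\<^sub>R (\<Sum>j\<in>UNIV. \<Sum>k\<in>UNIV. T j k) = 2 *\<^sub>R (- ((norm u)\<^sup>2) *\<^sub>R e)" .
  then have "(\<Sum>j\<in>UNIV. \<Sum>k\<in>UNIV. T j k) = - ((norm u)\<^sup>2) *\<^sub>R e"
    by (simp only: scaleR_cancel_left) simp
  then show ?thesis using S by simp
qed


lemma gderiv:
  fixes F1 F2 :: "(real^'p::finite) \<times> real \<Rightarrow> 'a::euclidean_space" and W :: "real^'q::finite \<Rightarrow> 'a"
  assumes bb: "bounded_bilinear mul" and lW: "linear W"
   and d1: "(F1 has_derivative F1') (at (xp0, \<sigma> * norm y0))"
   and d2: "(F2 has_derivative F2') (at (xp0, \<sigma> * norm y0))"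
   and y0: "y0 \<noteq> 0" and sg: "\<sigma> \<noteq> 0"
  shows "((\<lambda>z. F1 (fst z, \<sigma> * norm (snd z)) + inverse (\<sigma> * norm (snd z)) *\<^sub>R mul (W (snd z)) (F2 (fst z, \<sigma> * norm (snd z))))
     has_derivative (\<lambda>h. F1' (fst h, \<sigma> * (snd h \<bullet> sgn y0)) 
        + ((- (inverse (\<sigma> * norm y0))\<^sup>2 * (\<sigma> * (snd h \<bullet> sgn y0))) *\<^sub>R mul (W y0) (F2 (xp0, \<sigma> * norm y0))
        + inverse (\<sigma> * norm y0) *\<^sub>R (mul (W (snd h)) (F2 (xp0, \<sigma> * norm y0)) + mul (W y0) (F2' (fst h, \<sigma> * (snd h \<bullet> sgn y0)))))))
    (at (xp0,y0))"
proof -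
  have n: "((\<lambda>z::(real^'p) \<times> (real^'q). norm (snd z)) has_derivative (\<lambda>h. snd h \<bullet> sgn y0)) (at (xp0,y0))"
    using has_derivative_compose[OF has_derivative_snd[OF has_derivative_ident], of norm "\<lambda>h. h \<bullet> sgn y0" "(xp0,y0)" UNIV] has_derivative_norm[OF y0] by simp
  have a: "((\<lambda>z::(real^'p) \<times> (real^'q). (fst z, \<sigma> * norm (snd z))) has_derivative (\<lambda>h. (fst h, \<sigma> * (snd h \<bullet> sgn y0)))) (at (xp0,y0))"
    using has_derivative_Pair[OF has_derivative_fst[OF has_derivative_ident] has_derivative_mult_right[OF n, of \<sigma>]] by simp
  have c1: "((\<lambda>z. F1 (fst z, \<sigma> * norm (snd z))) has_derivative (\<lambda>h. F1' (fst h, \<sigma> * (snd h \<bullet> sgn y0)))) (at (xp0,y0))"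
    using has_derivative_compose[OF a, of F1] d1 by simp
  have c2: "((\<lambda>z. F2 (fst z, \<sigma> * norm (snd z))) has_derivative (\<lambda>h. F2' (fst h, \<sigma> * (snd h \<bullet> sgn y0)))) (at (xp0,y0))"
    using has_derivative_compose[OF a, of F2] d2 by simp
  have ns: "((\<lambda>z::(real^'p) \<times> (real^'q). \<sigma> * norm (snd z)) has_derivative (\<lambda>h. \<sigma> * (snd h \<bullet> sgn y0))) (at (xp0,y0))"
    using has_derivative_mult_right[OF n, of \<sigma>] by simp
  have wd: "((\<lambda>z::(real^'p) \<times> (real^'q). W (snd z)) has_derivative (\<lambda>h. W (snd h))) (at (xp0,y0))"
    using has_derivative_compose[OF has_derivative_snd[OF has_derivative_ident], of W W "(xp0,y0)" UNIV] linear_imp_has_derivative[OF lW] by simp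
  have m: "((\<lambda>z. mul (W (snd z)) (F2 (fst z, \<sigma> * norm (snd z)))) has_derivative (\<lambda>h. mul (W y0) (F2' (fst h, \<sigma> * (snd h \<bullet> sgn y0))) + mul (W (snd h)) (F2 (xp0, \<sigma> * norm y0)))) (at (xp0,y0))"
    using bounded_bilinear.FDERIV[OF bb wd c2] by simp
  have i: "((\<lambda>z::(real^'p) \<times> (real^'q). inverse (\<sigma> * norm (snd z))) has_derivative (\<lambda>h. - (inverse (\<sigma> * norm y0))\<^sup>2 * (\<sigma> * (snd h \<bullet> sgn y0)))) (at (xp0,y0))"
    using Deriv.has_derivative_inverse[OF _ ns] y0 sg by (simp add: power2_eq_square mult_ac)
  show ?thesis
    using has_derivative_add[OF c1 has_derivative_scaleR[OF i m]] by (simp add: algebra_simps)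
qed

lemma pd:
  assumes g: "(g has_derivative g') (at x)" and S: "open S" "x \<in> S" and fg: "\<And>z. z \<in> S \<Longrightarrow> f z = g z"
  shows "pderiv_dir f x v = g' v"
proof -
  have f: "(f has_derivative g') (at x)"
    using has_derivative_transform_within_open[OF g S] fg by metis
  have l: "((\<lambda>t::real. x + t *\<^sub>R v) has_derivative (\<lambda>t. t *\<^sub>R v)) (at 0)"
    by (rule derivative_eq_intros refl)+ simp
  have "((\<lambda>t. f (x + t *\<^sub>R v)) has_derivative (\<lambda>t. g' (t *\<^sub>R v))) (at 0)"
    using has_derivative_compose[OF l, of f] f by simp
  moreover have "linear g'" using has_derivative_linear[OF g] .
  ultimately have "((\<lambda>t. f (x + t *\<^sub>R v)) has_vector_derivative g' v) (at 0)"
    unfolding has_vector_derivative_def by (simp add: linear_cmul)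
  then show ?thesis unfolding pderiv_dir_def by (rule vector_derivative_at)
qed


lemma anti_W:
  assumes bb: "bounded_bilinear mul" and h: "\<forall>j. mul v (w j) = - mul (w j) v"
  shows "mul v (vecA w u) = - mul (vecA w u) v"
proof -
  interpret bb: bounded_bilinear mul by (rule bb)
  show ?thesis using h by (simp add: vecA_def bb.sum_left bb.sum_right bb.scaleR_left bb.scaleR_right sum_negf)
qed

lemma sum_mul_W:
  assumes bb: "bounded_bilinear mul"
  shows "(\<Sum>j\<in>UNIV. (u$j) *\<^sub>R mul (w j) a) = mul (vecA w u) a"
proof -
  interpret bb: bounded_bilinear mul by (rule bb)
  show ?thesis by (simp add: vecA_def bb.sum_left bb.scaleR_left)
qed

lemma keyDx:
  fixes mul :: "'a::euclidean_space \<Rightarrow> 'a \<Rightarrow> 'a" and vp :: "'p::finite \<Rightarrow> 'a" and w :: "'q::finite \<Rightarrow> 'a"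
    and D :: "((real^'p) \<times> real) set" and F1 F2 :: "(real^'p) \<times> real \<Rightarrow> 'a"
    and f :: "(real^'p) \<times> (real^'q) \<Rightarrow> 'a"
  assumes bb: "bounded_bilinear mul"
   and la: "\<forall>a b. assoc3 mul a a b = 0"
   and unit: "\<forall>x. mul e x = x"
   and v0: "vp i0 = e"
   and wsq: "\<forall>j. mul (w j) (w j) = - e"
   and anti_pq: "\<forall>i j. i \<noteq> i0 \<longrightarrow> mul (vp i) (w j) = - mul (w j) (vp i)"
   and anti_qq: "\<forall>j l. j \<noteq> l \<longrightarrow> mul (w j) (w l) = - mul (w l) (w j)"
   and D_open: "open D"
   and D_sym: "\<forall>xp r. (xp, r) \<in> D \<longrightarrow> (xp, - r) \<in> D"
   and F1_even: "\<forall>xp r. (xp, r) \<in> D \<longrightarrow> F1 (xp, - r) = F1 (xp, r)"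
   and F2_odd: "\<forall>xp r. (xp, r) \<in> D \<longrightarrow> F2 (xp, - r) = - F2 (xp, r)"
   and dF1: "\<forall>x\<in>D. (F1 has_derivative F1' x) (at x)"
   and dF2: "\<forall>x\<in>D. (F2 has_derivative F2' x) (at x)"
   and f_def: "\<forall>xp r \<omega>. (xp, r) \<in> D \<and> r \<ge> 0 \<and> norm \<omega> = 1 \<longrightarrow>
                   f (xp, r *\<^sub>R \<omega>) = F1 (xp, r) + mul (vecA w \<omega>) (F2 (xp, r))"
   and y0: "y0 \<noteq> 0" and rho: "\<rho> \<noteq> 0" "\<bar>\<rho>\<bar> = norm y0" and pD: "(xp0, \<rho>) \<in> D"
  shows "Dx mul vp w f (xp0, y0) =
     (Dxp mul vp F1 (xp0, \<rho>) - dr F2 (xp0, \<rho>) - ((real CARD('q) - 1) / \<rho>) *\<^sub>R F2 (xp0, \<rho>))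
     + mul (vecA w ((1/\<rho>) *\<^sub>R y0)) (Dxp_bar mul vp i0 F2 (xp0, \<rho>) + dr F1 (xp0, \<rho>))"
proof -
  interpret bb: bounded_bilinear mul by (rule bb)
  define W where "W = vecA w"
  have lW: "linear W" unfolding W_def by (rule vecA_lin)
  have W0: "W 0 = 0" unfolding W_def by (rule vecA_zero)
  define \<sigma> where "\<sigma> = \<rho> / norm y0"
  have ny: "norm y0 > 0" using y0 by simp
  have sr: "\<sigma> * norm y0 = \<rho>" unfolding \<sigma>_def using ny by simp
  have s1: "\<sigma> = 1 \<or> \<sigma> = -1"
  proof (cases "\<rho> \<ge> 0")
    case True then show ?thesis unfolding \<sigma>_def using rho by simp
  next
    case False then have "norm y0 = - \<rho>" using rho(2) by simp
    then show ?thesis unfolding \<sigma>_def using rho(1) by simp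
  qed
  have sg: "\<sigma> \<noteq> 0" using s1 by auto
  define p where "p = (xp0, \<rho>)"
  have pD': "p \<in> D" using pD p_def by simp
  define g where "g z = F1 (fst z, \<sigma> * norm (snd z)) + inverse (\<sigma> * norm (snd z)) *\<^sub>R mul (W (snd z)) (F2 (fst z, \<sigma> * norm (snd z)))" for z
  define G' where "G' h = F1' p (fst h, \<sigma> * (snd h \<bullet> sgn y0)) 
        + ((- (inverse \<rho>)\<^sup>2 * (\<sigma> * (snd h \<bullet> sgn y0))) *\<^sub>R mul (W y0) (F2 p)
        + inverse \<rho> *\<^sub>R (mul (W (snd h)) (F2 p) + mul (W y0) (F2' p (fst h, \<sigma> * (snd h \<bullet> sgn y0)))))" for h
  have gd: "(g has_derivative G') (at (xp0, y0))"
    using gderiv[OF bb lW, of F1 "F1' p" xp0 \<sigma> y0 F2 "F2' p"] dF1 dF2 pD' y0 sg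
    unfolding g_def G'_def sr p_def by simp
  define S where "S = {z::(real^'p) \<times> (real^'q). (fst z, norm (snd z)) \<in> D \<and> snd z \<noteq> 0}"
  have Sopen: "open S"
  proof -
    have "S = (\<lambda>z::(real^'p) \<times> (real^'q). (fst z, norm (snd z))) -` D \<inter> (snd -` (UNIV - {0}))"
      unfolding S_def by auto
    moreover have "open ((\<lambda>z::(real^'p) \<times> (real^'q). (fst z, norm (snd z))) -` D)"
      by (rule open_vimage[OF D_open]) (intro continuous_intros)
    moreover have "open (snd -` (UNIV - {0::real^'q}) :: ((real^'p) \<times> (real^'q)) set)"
      by (rule open_vimage_snd) auto
    ultimately show ?thesis by auto
  qed
  have x0S: "(xp0, y0) \<in> S"
  proof -
    have "(xp0, norm y0) \<in> D"
    proof (cases "\<rho> \<ge> 0")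
      case True then show ?thesis using pD rho(2) by simp
    next
      case False then have "norm y0 = - \<rho>" using rho(2) by simp
      then show ?thesis using D_sym pD by simp
    qed
    then show ?thesis unfolding S_def using y0 by simp
  qed
  have fg: "f z = g z" if zS: "z \<in> S" for z
  proof -
    obtain a y where z: "z = (a, y)" by (cases z)
    define n where "n = norm y"
    have aD: "(a, n) \<in> D" and yn: "y \<noteq> 0" using zS unfolding S_def z n_def by auto
    have n0: "n > 0" using yn n_def by simp
    have "f z = f (a, n *\<^sub>R (inverse n *\<^sub>R y))" using z n0 by simp
    also have "\<dots> = F1 (a, n) + mul (W (inverse n *\<^sub>R y)) (F2 (a, n))"
    proof -
      have "norm (inverse n *\<^sub>R y) = 1" using n0 n_def by simp
      then show ?thesis using f_def[rule_format, of a n "inverse n *\<^sub>R y"] aD n0 unfolding W_def by simp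
    qed
    also have "\<dots> = F1 (a, n) + inverse n *\<^sub>R mul (W y) (F2 (a, n))"
      by (simp add: linear_cmul[OF lW] bb.scaleR_left)
    finally have fz: "f z = F1 (a, n) + inverse n *\<^sub>R mul (W y) (F2 (a, n))" .
    show ?thesis using s1
    proof
      assume "\<sigma> = 1" then show ?thesis using fz unfolding g_def z n_def by simp
    next
      assume "\<sigma> = -1" then show ?thesis using fz F1_even F2_odd aD unfolding g_def z n_def
        by (simp add: bb.minus_right)
    qed
  qed
  have pdf: "pderiv_dir f (xp0, y0) v = G' v" for v
    by (rule pd[OF gd Sopen x0S fg])
  have pdF1: "pderiv_dir F1 p v = F1' p v" for v
    using pd[of F1 "F1' p" p D F1 v] dF1 pD' D_open by simp
  have pdF2: "pderiv_dir F2 p v = F2' p v" for v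
    using pd[of F2 "F2' p" p D F2 v] dF2 pD' D_open by simp
  have lin1: "linear (F1' p)" using dF1 pD' has_derivative_linear by blast
  have lin2: "linear (F2' p)" using dF2 pD' has_derivative_linear by blast
  define u where "u = (1/\<rho>) *\<^sub>R y0"
  define Wo where "Wo = vecA w u"
  have Y: "W y0 = \<rho> *\<^sub>R Wo" unfolding Wo_def W_def u_def using rho(1)
    by (simp add: linear_cmul[OF vecA_lin])
  have nu: "norm u = 1" unfolding u_def using rho y0 by simp
  have WoWo: "mul Wo (mul Wo a) = - a" for a
  proof -
    have "mul Wo (mul Wo a) = mul (mul Wo Wo) a" using la by (simp add: assoc3_def)
    also have "\<dots> = - a" unfolding Wo_def using vecA_sq[OF bb wsq anti_qq, of u] nu unit
      by (simp add: bb.minus_left bb.scaleR_left)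
    finally show ?thesis .
  qed
  have wjwj: "mul (w j) (mul (w j) a) = - a" for j a
  proof -
    have "mul (w j) (mul (w j) a) = mul (mul (w j) (w j)) a" using la by (simp add: assoc3_def)
    then show ?thesis using wsq unit by (simp add: bb.minus_left)
  qed
  have rs: "\<rho> * \<sigma> = norm y0" using s1 sr by auto
  have cj: "\<sigma> * (axis j 1 \<bullet> sgn y0) = u $ j" for j
    unfolding u_def using sr ny rho rs
    by (simp add: inner_axis' sgn_div_norm field_simps)
  have Gp: "G' (axis i 1, 0) = F1' p (axis i 1, 0) + inverse \<rho> *\<^sub>R mul (W y0) (F2' p (axis i 1, 0))" for i
    unfolding G'_def by (simp add: W0 bb.zero_left)
  have Gq: "G' (0, axis j 1) = u$j *\<^sub>R dr F1 p - ((inverse \<rho>)\<^sup>2 * u$j) *\<^sub>R mul (W y0) (F2 p)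
      + inverse \<rho> *\<^sub>R mul (w j) (F2 p) + (inverse \<rho> * u$j) *\<^sub>R mul (W y0) (dr F2 p)" for j
  proof -
    have e: "(0::real^'p, u$j) = u$j *\<^sub>R (0, 1)" by simp
    have "F1' p (0, u$j) = u$j *\<^sub>R F1' p (0,1)" "F2' p (0, u$j) = u$j *\<^sub>R F2' p (0,1)"
      by (simp_all only: e linear_cmul[OF lin1] linear_cmul[OF lin2])
    then show ?thesis unfolding G'_def cj dr_def pdF1 pdF2 W_def
      by (simp add: cj vecA_axis bb.scaleR_right algebra_simps)
  qed
  have Dx_split: "Dx mul vp w f (xp0, y0) = (\<Sum>i\<in>UNIV. mul (vp i) (G' (axis i 1, 0))) + (\<Sum>j\<in>UNIV. mul (w j) (G' (0, axis j 1)))"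
    unfolding Dx_def pdf ..
  have antiWo: "mul (vp i) (mul Wo a) = - mul Wo (mul (vp i) a)" if "i \<noteq> i0" for i a
  proof -
    have "mul (vp i) Wo = - mul Wo (vp i)" unfolding Wo_def
      by (rule anti_W[OF bb]) (use anti_pq that in auto)
    then have "mul (vp i) (mul Wo a) + mul Wo (mul (vp i) a) = 0"
      using lalt_lin[OF bb la, of "vp i" Wo a] by (simp add: bb.zero_left)
    then show ?thesis by (simp add: eq_neg_iff_add_eq_0)
  qed
  have P: "(\<Sum>i\<in>UNIV. mul (vp i) (G' (axis i 1, 0))) = Dxp mul vp F1 p + mul Wo (Dxp_bar mul vp i0 F2 p)"
  proof -
    have e1: "inverse \<rho> *\<^sub>R mul (W y0) a = mul Wo a" for a
      using Y rho(1) by (simp add: bb.scaleR_left)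
    have "(\<Sum>i\<in>UNIV. mul (vp i) (G' (axis i 1, 0))) = (\<Sum>i\<in>UNIV. mul (vp i) (F1' p (axis i 1, 0))) + (\<Sum>i\<in>UNIV. mul (vp i) (mul Wo (F2' p (axis i 1, 0))))"
      unfolding Gp e1 by (simp add: bb.add_right sum.distrib)
    also have "(\<Sum>i\<in>UNIV. mul (vp i) (F1' p (axis i 1, 0))) = Dxp mul vp F1 p"
      unfolding Dxp_def pdF1 ..
    also have "(\<Sum>i\<in>UNIV. mul (vp i) (mul Wo (F2' p (axis i 1, 0)))) = mul Wo (Dxp_bar mul vp i0 F2 p)"
    proof -
      have "(\<Sum>i\<in>UNIV. mul (vp i) (mul Wo (F2' p (axis i 1, 0)))) = mul (vp i0) (mul Wo (F2' p (axis i0 1, 0))) + (\<Sum>i\<in>UNIV - {i0}. mul (vp i) (mul Wo (F2' p (axis i 1, 0))))"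
        by (simp add: sum.remove)
      also have "(\<Sum>i\<in>UNIV - {i0}. mul (vp i) (mul Wo (F2' p (axis i 1, 0)))) = (\<Sum>i\<in>UNIV - {i0}. - mul Wo (mul (vp i) (F2' p (axis i 1, 0))))"
        by (rule sum.cong) (auto simp: antiWo)
      also have "\<dots> = - mul Wo (\<Sum>i\<in>UNIV - {i0}. mul (vp i) (F2' p (axis i 1, 0)))"
        by (simp add: bb.sum_right sum_negf)
      finally show ?thesis unfolding Dxp_bar_def pdF2 using v0 unit by (simp add: bb.diff_right)
    qed
    finally show ?thesis .
  qed
  have Qj: "mul (w j) (G' (0, axis j 1)) = u$j *\<^sub>R mul (w j) (dr F1 p) - inverse \<rho> *\<^sub>R (u$j *\<^sub>R mul (w j) (mul Wo (F2 p)))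
      - inverse \<rho> *\<^sub>R F2 p + u$j *\<^sub>R mul (w j) (mul Wo (dr F2 p))" for j
  proof -
    have sc1: "inverse \<rho> * c * \<rho> = c" "inverse \<rho> * inverse \<rho> * c * \<rho> = inverse \<rho> * c" for c
      using rho(1) by (simp_all add: field_simps)
    show ?thesis
    unfolding Gq Y using rho(1) wjwj
    apply (simp add: bb.add_right bb.diff_right bb.scaleR_right bb.scaleR_left power2_eq_square)
    apply (simp only: sc1)
    done
  qed
  have Q: "(\<Sum>j\<in>UNIV. mul (w j) (G' (0, axis j 1))) = mul Wo (dr F1 p) - dr F2 p - ((real CARD('q) - 1) / \<rho>) *\<^sub>R F2 p"
  proof -
    have aux: "(\<Sum>j\<in>UNIV. (inverse \<rho> * u$j) *\<^sub>R mul (w j) a) = inverse \<rho> *\<^sub>R mul (vecA w u) a" for a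
    proof -
      have "(\<Sum>j\<in>UNIV. (inverse \<rho> * u$j) *\<^sub>R mul (w j) a) = inverse \<rho> *\<^sub>R (\<Sum>j\<in>UNIV. u$j *\<^sub>R mul (w j) a)"
        by (simp add: scaleR_sum_right)
      then show ?thesis by (simp only: sum_mul_W[OF bb])
    qed
    have "(\<Sum>j\<in>UNIV. mul (w j) (G' (0, axis j 1))) = mul Wo (dr F1 p) - inverse \<rho> *\<^sub>R mul Wo (mul Wo (F2 p))
       - (\<Sum>j\<in>(UNIV::'q set). inverse \<rho> *\<^sub>R F2 p) + mul Wo (mul Wo (dr F2 p))"
      unfolding Qj Wo_def
      by (simp add: sum.distrib sum_subtractf scaleR_sum_right[symmetric] sum_mul_W[OF bb] aux)
    also have "\<dots> = mul Wo (dr F1 p) + inverse \<rho> *\<^sub>R F2 p - (real CARD('q) * inverse \<rho>) *\<^sub>R F2 p - dr F2 p"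
      by (simp add: WoWo sum_constant_scaleR)
    also have "\<dots> = mul Wo (dr F1 p) - dr F2 p - ((real CARD('q) - 1) / \<rho>) *\<^sub>R F2 p"
      by (simp add: divide_inverse algebra_simps)
    finally show ?thesis .
  qed
  show ?thesis unfolding Dx_split P Q Wo_def u_def p_def
    by (simp add: bb.add_right algebra_simps)
qed


lemma OmegaD_char: "OmegaD D = {z::(real^'p::finite) \<times> (real^'q::finite). (fst z, norm (snd z)) \<in> D}"
proof (rule set_eqI, rule iffI)
  fix z assume "z \<in> OmegaD D"
  then obtain xp r \<omega> where "z = (xp, r *\<^sub>R \<omega>)" "(xp, r) \<in> D" "r \<ge> 0" "norm \<omega> = 1"
    unfolding OmegaD_def by blast
  then show "z \<in> {z. (fst z, norm (snd z)) \<in> D}" by simp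
next
  fix z :: "(real^'p) \<times> (real^'q)" assume z: "z \<in> {z. (fst z, norm (snd z)) \<in> D}"
  obtain xp y where zz: "z = (xp, y)" by (cases z)
  show "z \<in> OmegaD D"
  proof (cases "y = 0")
    case True
    have "z = (xp, 0 *\<^sub>R axis undefined 1) \<and> (xp, 0) \<in> D \<and> (0::real) \<le> 0 \<and> norm (axis undefined 1 :: real^'q) = 1"
      using zz True z by (simp add: norm_axis_1)
    then show ?thesis unfolding OmegaD_def by blast
  next
    case False
    have "z = (xp, norm y *\<^sub>R sgn y) \<and> (xp, norm y) \<in> D \<and> 0 \<le> norm y \<and> norm (sgn y) = 1"
      using zz False z by (simp add: norm_sgn sgn_div_norm)
    then show ?thesis unfolding OmegaD_def by blast
  qed
qed

theorem lemma4p8: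
  fixes mul :: "'a::euclidean_space \<Rightarrow> 'a \<Rightarrow> 'a" and e :: 'a and cj :: "'a \<Rightarrow> 'a"
    and vp :: "'p::finite \<Rightarrow> 'a" and i0 :: 'p and w :: "'q::finite \<Rightarrow> 'a"
    and D :: "((real^'p) \<times> real) set"
    and F1 F2 :: "(real^'p) \<times> real \<Rightarrow> 'a"
    and f :: "(real^'p) \<times> (real^'q) \<Rightarrow> 'a"
  assumes alg: "alt_algebra_inv mul e cj"
    and dimA: "DIM('a) > 1"
    and sph_ne: "sphA mul e cj \<noteq> {}"
    and v0: "vp i0 = e"
    and vp_sph: "\<forall>i. i \<noteq> i0 \<longrightarrow> vp i \<in> sphA mul e cj"
    and w_sph: "\<forall>j. w j \<in> sphA mul e cj"
    and anti_pp: "\<forall>i k. i \<noteq> i0 \<and> k \<noteq> i0 \<and> i \<noteq> k \<longrightarrow> mul (vp i) (vp k) = - mul (vp k) (vp i)"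
    and anti_pq: "\<forall>i j. i \<noteq> i0 \<longrightarrow> mul (vp i) (w j) = - mul (w j) (vp i)"
    and anti_qq: "\<forall>j l. j \<noteq> l \<longrightarrow> mul (w j) (w l) = - mul (w l) (w j)"
    and indep: "inj (\<lambda>(a, b). vecA vp a + vecA w b)"
    and M_sub_Q: "range (\<lambda>(a, b). vecA vp a + vecA w b) \<subseteq> QA mul e cj"
    and D_open: "open D" and D_conn: "connected D"
    and D_sym: "\<forall>xp r. (xp, r) \<in> D \<longrightarrow> (xp, - r) \<in> D"
    and F1_even: "\<forall>xp r. (xp, r) \<in> D \<longrightarrow> F1 (xp, - r) = F1 (xp, r)"
    and F2_odd: "\<forall>xp r. (xp, r) \<in> D \<longrightarrow> F2 (xp, - r) = - F2 (xp, r)"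
    and F1_C1: "C1_on D F1" and F2_C1: "C1_on D F2"
    and f_def: "\<forall>xp r \<omega>. (xp, r) \<in> D \<and> r \<ge> 0 \<and> norm \<omega> = 1 \<longrightarrow>
                   f (xp, r *\<^sub>R \<omega>) = F1 (xp, r) + mul (vecA w \<omega>) (F2 (xp, r))"
    and f_C1: "C1_on (OmegaD D) f"
  shows "(\<forall>x\<in>OmegaD D. Dx mul vp w f x = 0) \<longleftrightarrow>
         (\<forall>xp r. (xp, r) \<in> D \<and> r \<noteq> 0 \<longrightarrow>
             Dxp mul vp F1 (xp, r) - dr F2 (xp, r) = ((real CARD('q) - 1) / r) *\<^sub>R F2 (xp, r) \<and>
             Dxp_bar mul vp i0 F2 (xp, r) + dr F1 (xp, r) = 0)"
proof -
  have bil: "bilinear mul" using alg unfolding alt_algebra_inv_def by (elim conjE) assumption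
  have bb: "bounded_bilinear mul" using bil bilinear_conv_bounded_bilinear by blast
  interpret bb: bounded_bilinear mul by (rule bb)
  have la: "\<forall>a b. assoc3 mul a a b = 0" using alg unfolding alt_algebra_inv_def by (elim conjE) assumption
  have unit: "\<forall>x. mul e x = x" using alg unfolding alt_algebra_inv_def by simp
  have lcj: "linear cj" using alg unfolding alt_algebra_inv_def by (elim conjE) assumption
  have wsq: "\<forall>j. mul (w j) (w j) = - e"
  proof
    fix j
    have wj: "w j \<in> sphA mul e cj" using w_sph by simp
    have t: "w j + cj (w j) = 0" using wj unfolding sphA_def trc_def by simp
    have n: "mul (w j) (cj (w j)) = e" using wj unfolding sphA_def nrm_def by simp
    have "cj (w j) = (w j + cj (w j)) - w j" by simp
    then have c: "cj (w j) = - w j" using t by simp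
    have "mul (w j) (w j) = - mul (w j) (cj (w j))" using c by (simp add: bb.minus_right)
    then show "mul (w j) (w j) = - e" using n by simp
  qed
  obtain F1' where dF1: "\<forall>x\<in>D. (F1 has_derivative F1' x) (at x)" using F1_C1 unfolding C1_on_def by blast
  obtain F2' where dF2: "\<forall>x\<in>D. (F2 has_derivative F2' x) (at x)" using F2_C1 unfolding C1_on_def by blast
  obtain f' where df: "\<forall>x\<in>OmegaD D. (f has_derivative f' x) (at x)" and cf: "\<forall>v. continuous_on (OmegaD D) (\<lambda>x. f' x v)"
    using f_C1 unfolding C1_on_def by blast
  note key = keyDx[OF bb la unit v0 wsq anti_pq anti_qq D_open D_sym F1_even F2_odd dF1 dF2 f_def]
  have Oopen: "open (OmegaD D)" unfolding OmegaD_char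
    by (rule open_vimage[OF D_open, of "\<lambda>z. (fst z, norm (snd z))", simplified vimage_def]) (intro continuous_intros)
  have absD: "(xp, \<bar>r\<bar>) \<in> D" if "(xp, r) \<in> D" for xp r
  proof (cases "r \<ge> 0")
    case True then show ?thesis using that by simp
  next
    case False then show ?thesis using D_sym[rule_format, OF that] by simp
  qed
  define a where "a = (axis undefined 1 :: real^'q)"
  have na: "norm a = 1" unfolding a_def by (simp add: norm_axis_1)
  have a0: "a \<noteq> 0" using na by auto
  have WaWa: "mul (vecA w a) (mul (vecA w a) b) = - b" for b
  proof -
    have "mul (vecA w a) (mul (vecA w a) b) = mul (mul (vecA w a) (vecA w a)) b" using la by (simp add: assoc3_def)
    also have "\<dots> = - b" using vecA_sq[OF bb wsq anti_qq, of a] na unit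
      by (simp add: bb.minus_left bb.scaleR_left)
    finally show ?thesis .
  qed
  let ?A = "\<lambda>xp r. Dxp mul vp F1 (xp, r) - dr F2 (xp, r) - ((real CARD('q) - 1) / r) *\<^sub>R F2 (xp, r)"
  let ?B = "\<lambda>xp r. Dxp_bar mul vp i0 F2 (xp, r) + dr F1 (xp, r)"
  show ?thesis
  proof
    assume H: "\<forall>x\<in>OmegaD D. Dx mul vp w f x = 0"
    show "\<forall>xp r. (xp, r) \<in> D \<and> r \<noteq> 0 \<longrightarrow>
             Dxp mul vp F1 (xp, r) - dr F2 (xp, r) = ((real CARD('q) - 1) / r) *\<^sub>R F2 (xp, r) \<and>
             Dxp_bar mul vp i0 F2 (xp, r) + dr F1 (xp, r) = 0"
    proof (intro allI impI)
      fix xp r assume xr: "(xp, r) \<in> D \<and> r \<noteq> 0"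
      have xD: "(xp, r) \<in> D" and r0: "r \<noteq> 0" using xr by auto
      have i1: "(xp, r *\<^sub>R a) \<in> OmegaD D" "(xp, (- r) *\<^sub>R a) \<in> OmegaD D"
        unfolding OmegaD_char using absD xr na by simp_all
      have k1: "Dx mul vp w f (xp, r *\<^sub>R a) = ?A xp r + mul (vecA w ((1/r) *\<^sub>R (r *\<^sub>R a))) (?B xp r)"
        by (rule key) (simp_all add: xD r0 a0 na)
      have k2: "Dx mul vp w f (xp, (- r) *\<^sub>R a) = ?A xp r + mul (vecA w ((1/r) *\<^sub>R ((- r) *\<^sub>R a))) (?B xp r)"
        by (rule key) (simp_all add: xD r0 a0 na)
      define X where "X = mul (vecA w a) (?B xp r)"
      have s1: "(1/r) *\<^sub>R (r *\<^sub>R a) = a" "(1/r) *\<^sub>R ((- r) *\<^sub>R a) = - a" using r0 by simp_all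
      have Wm: "vecA w (- a) = - vecA w a" using linear_cmul[OF vecA_lin, of w "-1" a] by simp
      have e1: "?A xp r + X = 0" using k1 H i1 unfolding s1 X_def by simp
      have e2: "?A xp r - X = 0" using k2 H i1 unfolding s1 Wm X_def by (simp add: bb.minus_left)
      have a1: "?A xp r = X" using e2 by simp
      have "X + X = 0" using e1 unfolding a1 .
      then have "(2::real) *\<^sub>R X = 0" by (simp add: scaleR_2)
      then have X0: "X = 0" by simp
      have A0: "?A xp r = 0" using e1 X0 by simp
      have "mul (vecA w a) (?B xp r) = 0" using X0 X_def by simp
      then have "mul (vecA w a) (mul (vecA w a) (?B xp r)) = 0" by (simp add: bb.zero_right)
      then have "- ?B xp r = 0" using WaWa[of "?B xp r"] by (simp only:)
      then have B0: "?B xp r = 0" by (simp only: neg_equal_0_iff_equal)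
      show "Dxp mul vp F1 (xp, r) - dr F2 (xp, r) = ((real CARD('q) - 1) / r) *\<^sub>R F2 (xp, r) \<and>
             Dxp_bar mul vp i0 F2 (xp, r) + dr F1 (xp, r) = 0"
        using A0 B0 by simp
    qed
  next
    assume E: "\<forall>xp r. (xp, r) \<in> D \<and> r \<noteq> 0 \<longrightarrow>
             Dxp mul vp F1 (xp, r) - dr F2 (xp, r) = ((real CARD('q) - 1) / r) *\<^sub>R F2 (xp, r) \<and>
             Dxp_bar mul vp i0 F2 (xp, r) + dr F1 (xp, r) = 0"
    have nz: "Dx mul vp w f (xp, y) = 0" if "(xp, y) \<in> OmegaD D" "y \<noteq> 0" for xp y
    proof -
      have xD: "(xp, norm y) \<in> D" using that unfolding OmegaD_char by simp
      have "Dx mul vp w f (xp, y) = ?A xp (norm y) + mul (vecA w ((1/norm y) *\<^sub>R y)) (?B xp (norm y))"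
        by (rule key) (simp_all add: that xD)
      moreover have EE: "Dxp mul vp F1 (xp, norm y) - dr F2 (xp, norm y) = ((real CARD('q) - 1) / norm y) *\<^sub>R F2 (xp, norm y) \<and>
             Dxp_bar mul vp i0 F2 (xp, norm y) + dr F1 (xp, norm y) = 0"
        using E[rule_format, of xp "norm y"] xD that(2) by simp
      then have "?A xp (norm y) = 0" "?B xp (norm y) = 0" by simp_all
      ultimately show ?thesis by (simp add: bb.zero_right)
    qed
    define H where "H x = (\<Sum>i\<in>UNIV. mul (vp i) (f' x (axis i 1, 0))) + (\<Sum>j\<in>UNIV. mul (w j) (f' x (0, axis j 1)))" for x
    have DxH: "Dx mul vp w f x = H x" if "x \<in> OmegaD D" for x
    proof -
      have "pderiv_dir f x v = f' x v" for v
        using pd[of f "f' x" x "OmegaD D" f v] df that Oopen by simp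
      then show ?thesis unfolding Dx_def H_def by simp
    qed
    have Hc: "continuous_on (OmegaD D) H"
    proof -
      have c1: "continuous_on (OmegaD D) (\<lambda>x. mul c (f' x v))" for c v
        using bb.continuous_on[OF continuous_on_const cf[rule_format, of v]] .
      show ?thesis unfolding H_def
        by (intro continuous_on_add continuous_on_sum c1)
    qed
    show "\<forall>x\<in>OmegaD D. Dx mul vp w f x = 0"
    proof
      fix x :: "(real^'p) \<times> (real^'q)" assume xO: "x \<in> OmegaD D"
      obtain xp y where xx: "x = (xp, y)" by (cases x)
      show "Dx mul vp w f x = 0"
      proof (cases "y = 0")
        case False then show ?thesis using nz[of xp y] xO xx by simp
      next
        case True
        define s where "s n = (xp, inverse (real (Suc n)) *\<^sub>R a)" for n
        have i0: "(\<lambda>n. inverse (real (Suc n))) \<longlonglongrightarrow> 0"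
          using LIMSEQ_inverse_real_of_nat by simp
        have "(\<lambda>n. inverse (real (Suc n)) *\<^sub>R a) \<longlonglongrightarrow> 0"
          using tendsto_scaleR[OF i0 tendsto_const, of a] by simp
        then have sl: "s \<longlonglongrightarrow> x" unfolding s_def xx True
          by (rule tendsto_Pair[OF tendsto_const])
        have ev: "eventually (\<lambda>n. s n \<in> OmegaD D) sequentially"
          using topological_tendstoD[OF sl Oopen xO] .
        have ev0: "eventually (\<lambda>n. H (s n) = 0) sequentially"
          using ev
        proof (rule eventually_mono)
          fix n assume sO: "s n \<in> OmegaD D"
          have "inverse (real (Suc n)) *\<^sub>R a \<noteq> 0" using a0 by simp
          then have "Dx mul vp w f (s n) = 0" using nz[of xp "inverse (real (Suc n)) *\<^sub>R a"] sO unfolding s_def by simp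
          then show "H (s n) = 0" using DxH sO by simp
        qed
        have "isCont H x" using continuous_on_eq_continuous_at[OF Oopen] Hc xO by blast
        then have l1: "(\<lambda>n. H (s n)) \<longlonglongrightarrow> H x" using isCont_tendsto_compose[OF _ sl] by blast
        have l2: "(\<lambda>n. H (s n)) \<longlonglongrightarrow> 0" using ev0 by (rule tendsto_eventually)
        have "H x = 0" using LIMSEQ_unique[OF l1 l2] .
        then show ?thesis using DxH xO by simp
      qed
    qed
  qed
qed


end
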